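(* Every graph $G$ satisfies $\mathrm{cop}(G)\le \mathrm{circ}(G)/2$, where $\mathrm{circ}(G)$ is the circumference of $G$.
   Context: All graphs are finite, undirected, without loops or multiple edges. The circumference $\mathrm{circ}(G)$ of a graph is the length of its longest cycle, or $+\infty$ if it has no cycle. Cops and Robber game on a connected graph: for an integer $k\ge 1$, the cop player places $k$ cops on (not necessarily distinct) vertices, then the robber is placed on a vertex; then, starting with the cops, the players alternate moves. In a cop move, each cop either stays or moves to an adjacent vertex; in a robber move, the robber stays or moves to an adjacent vertex. The cops win if at some point a cop and the robber occupy the same vertex. Both players have complete information. The cop number $\mathrm{cop}(G)$ of a connected graph $G$ is the smallest $k$ such that the cops have a winning strategy with $k$ cops; for a non-connected graph it is the maximum cop number of its connected components. *)

theory Defs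
  imports Main "HOL-Library.Extended_Nat"
begin

definition simple_graph :: "'a set \<Rightarrow> ('a \<Rightarrow> 'a \<Rightarrow> bool) \<Rightarrow> bool" where
  "simple_graph V E \<longleftrightarrow> finite V \<and> (\<forall>u v. E u v \<longrightarrow> E v u)
     \<and> (\<forall>v. \<not> E v v) \<and> (\<forall>u v. E u v \<longrightarrow> u \<in> V \<and> v \<in> V)"

definition is_cycle :: "'a set \<Rightarrow> ('a \<Rightarrow> 'a \<Rightarrow> bool) \<Rightarrow> 'a list \<Rightarrow> bool" where
  "is_cycle V E xs \<longleftrightarrow> length xs \<ge> 3 \<and> distinct xs \<and> set xs \<subseteq> V
     \<and> (\<forall>i. Suc i < length xs \<longrightarrow> E (xs ! i) (xs ! Suc i))
     \<and> E (last xs) (hd xs)"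

definition circumference :: "'a set \<Rightarrow> ('a \<Rightarrow> 'a \<Rightarrow> bool) \<Rightarrow> enat" where
  "circumference V E =
     (if \<exists>xs. is_cycle V E xs
      then enat (Max {length xs | xs. is_cycle V E xs})
      else \<infinity>)"

definition cop_move :: "('a \<Rightarrow> 'a \<Rightarrow> bool) \<Rightarrow> 'a list \<Rightarrow> 'a list \<Rightarrow> bool" where
  "cop_move E cs cs' \<longleftrightarrow> list_all2 (\<lambda>c c'. c' = c \<or> E c c') cs cs'"

text \<open>\<open>cops_force V E cs r\<close>: it is the cops' turn, cops at cs, robber at r, and the cops
  can force capture in finitely many moves (least fixed point = winning region of the
  reachability game).\<close>

inductive cops_force :: "'a set \<Rightarrow> ('a \<Rightarrow> 'a \<Rightarrow> bool) \<Rightarrow> 'a list \<Rightarrow> 'a \<Rightarrow> bool"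
  for V :: "'a set" and E :: "'a \<Rightarrow> 'a \<Rightarrow> bool" where
  caught: "r \<in> set cs \<Longrightarrow> cops_force V E cs r"
| move: "cop_move E cs cs' \<Longrightarrow>
          (r \<in> set cs' \<or> (\<forall>r'. (r' = r \<or> E r r') \<longrightarrow> (r' \<in> set cs' \<or> cops_force V E cs' r')))
          \<Longrightarrow> cops_force V E cs r"

definition cops_win :: "'a set \<Rightarrow> ('a \<Rightarrow> 'a \<Rightarrow> bool) \<Rightarrow> nat \<Rightarrow> bool" where
  "cops_win V E k \<longleftrightarrow>
     (\<exists>cs. length cs = k \<and> set cs \<subseteq> V \<and> (\<forall>r\<in>V. cops_force V E cs r))"

definition component_of :: "'a set \<Rightarrow> ('a \<Rightarrow> 'a \<Rightarrow> bool) \<Rightarrow> 'a \<Rightarrow> 'a set" where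
  "component_of V E v = {u \<in> V. (\<lambda>x y. x \<in> V \<and> y \<in> V \<and> E x y)\<^sup>*\<^sup>* v u}"

definition components :: "'a set \<Rightarrow> ('a \<Rightarrow> 'a \<Rightarrow> bool) \<Rightarrow> 'a set set" where
  "components V E = component_of V E ` V"

definition induced :: "'a set \<Rightarrow> ('a \<Rightarrow> 'a \<Rightarrow> bool) \<Rightarrow> 'a \<Rightarrow> 'a \<Rightarrow> bool" where
  "induced C E = (\<lambda>x y. x \<in> C \<and> y \<in> C \<and> E x y)"

definition cop_number_connected :: "'a set \<Rightarrow> ('a \<Rightarrow> 'a \<Rightarrow> bool) \<Rightarrow> nat" where
  "cop_number_connected V E = (LEAST k. 1 \<le> k \<and> cops_win V E k)"

definition cop_number :: "'a set \<Rightarrow> ('a \<Rightarrow> 'a \<Rightarrow> bool) \<Rightarrow> nat" where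
  "cop_number V E =
     Max (insert 0 ((\<lambda>C. cop_number_connected C (induced C E)) ` components V E))"

end

theory Submission
  imports Defs
begin


fun walk :: "('a \<Rightarrow> 'a \<Rightarrow> bool) \<Rightarrow> 'a list \<Rightarrow> bool" where
  "walk R [] = True"
| "walk R [x] = True"
| "walk R (x # y # xs) = (R x y \<and> walk R (y # xs))"

lemma walk_Cons: "walk R (x # xs) = (walk R xs \<and> (xs \<noteq> [] \<longrightarrow> R x (hd xs)))"
  by (cases xs) auto

lemma walk_append:
  "walk R (xs @ ys) = (walk R xs \<and> walk R ys \<and> (xs \<noteq> [] \<and> ys \<noteq> [] \<longrightarrow> R (last xs) (hd ys)))"
  by (induction xs) (auto simp: walk_Cons)

lemma walk_nth: "walk R xs \<longleftrightarrow> (\<forall>i. Suc i < length xs \<longrightarrow> R (xs ! i) (xs ! Suc i))"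
proof (induction xs)
  case Nil then show ?case by simp
next
  case (Cons x xs)
  show ?case
  proof
    assume h: "walk R (x # xs)"
    show "\<forall>i. Suc i < length (x # xs) \<longrightarrow> R ((x # xs) ! i) ((x # xs) ! Suc i)"
    proof (intro allI impI)
      fix i assume "Suc i < length (x # xs)"
      then show "R ((x # xs) ! i) ((x # xs) ! Suc i)"
        using h Cons by (cases i) (auto simp: walk_Cons hd_conv_nth)
    qed
  next
    assume h: "\<forall>i. Suc i < length (x # xs) \<longrightarrow> R ((x # xs) ! i) ((x # xs) ! Suc i)"
    have "xs \<noteq> [] \<longrightarrow> R x (hd xs)" using h[rule_format, of 0] by (auto simp: hd_conv_nth)
    moreover have "\<forall>i. Suc i < length xs \<longrightarrow> R (xs ! i) (xs ! Suc i)"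
      using h by (metis Suc_less_eq length_Cons nth_Cons_Suc)
    ultimately show "walk R (x # xs)" using Cons by (simp add: walk_Cons)
  qed
qed

lemma walk_rev: "(\<And>u v. R u v \<Longrightarrow> R v u) \<Longrightarrow> walk R xs \<Longrightarrow> walk R (rev xs)"
  by (induction xs) (auto simp: walk_Cons walk_append last_rev)

lemma walk_drop: "walk R xs \<Longrightarrow> walk R (drop i xs)"
  by (metis append_take_drop_id walk_append)

definition relS :: "'a set \<Rightarrow> ('a \<Rightarrow> 'a \<Rightarrow> bool) \<Rightarrow> 'a \<Rightarrow> 'a \<Rightarrow> bool" where
  "relS S E = (\<lambda>x y. x \<in> S \<and> y \<in> S \<and> E x y)"

lemma reach_in: "(relS S E)\<^sup>*\<^sup>* a b \<Longrightarrow> a \<in> S \<Longrightarrow> b \<in> S"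
  by (induction rule: rtranclp_induct) (auto simp: relS_def)

lemma simple_path:
  assumes "(relS S E)\<^sup>*\<^sup>* a b" "a \<in> S"
  shows "\<exists>Q. Q \<noteq> [] \<and> hd Q = a \<and> last Q = b \<and> distinct Q \<and> set Q \<subseteq> S \<and> walk E Q"
  using assms
proof (induction rule: rtranclp_induct)
  case base
  then show ?case by (intro exI[of _ "[a]"]) auto
next
  case (step y b)
  then obtain Q where Q: "Q \<noteq> []" "hd Q = a" "last Q = y" "distinct Q" "set Q \<subseteq> S" "walk E Q" by blast
  show ?case
  proof (cases "b \<in> set Q")
    case True
    then obtain ys zs where yz: "Q = ys @ b # zs" by (meson split_list)
    have w: "walk E (ys @ [b])" using Q(6) unfolding yz
      by (metis append.assoc append_Cons append_Nil walk_append)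
    show ?thesis
      apply (intro exI[of _ "ys @ [b]"])
      using Q yz w by (cases ys) auto
  next
    case False
    have "walk E (Q @ [b])" using Q step(2) by (simp add: walk_append relS_def)
    then show ?thesis using Q False step(2)
      by (intro exI[of _ "Q @ [b]"]) (auto simp: relS_def)
  qed
qed

lemma first_hit:
  assumes "(relS S E)\<^sup>*\<^sup>* a b"
  shows "a \<noteq> b \<Longrightarrow> \<exists>y. (relS (S - {b}) E)\<^sup>*\<^sup>* a y \<and> y \<in> S - {b} \<and> E y b"
  using assms
proof (induction rule: converse_rtranclp_induct)
  case base then show ?case by simp
next
  case (step a a')
  show ?case
  proof (cases "a' = b")
    case True then show ?thesis using step by (auto simp: relS_def)
  next
    case False
    then obtain y where y: "(relS (S - {b}) E)\<^sup>*\<^sup>* a' y" "y \<in> S - {b}" "E y b" using step by blast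
    have "relS (S - {b}) E a a'" using step False by (auto simp: relS_def)
    then show ?thesis using y by (meson converse_rtranclp_into_rtranclp)
  qed
qed

lemma arith_dom:
  fixes L i :: nat
  assumes "i < L"
  shows "L - 1 - (2*((L - 1 - i - 1) div 2)+1) = i \<or> Suc (L - 1 - (2*((L - 1 - i - 1) div 2)+1)) = i \<or> L - 1 - (2*((L - 1 - i - 1) div 2)+1) = Suc i"
proof -
  define d where "d = L - 1 - i"
  have Ld: "L - 1 = d + i" using assms d_def by simp
  have "d = 0 \<or> (\<exists>q. d = 2*q+1) \<or> (\<exists>q. d = 2*q+2)" by presburger
  then show ?thesis unfolding d_def[symmetric] Ld by auto
qed

lemma jm: fixes L i c :: nat assumes "L - i \<le> c" "2 \<le> c" "i < L" shows "(L - 1 - i - 1) div 2 < c div 2"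
proof -
  have "L - 1 - i - 1 \<le> c - 2" using assms by linarith
  then have "(L - 1 - i - 1) div 2 \<le> (c - 2) div 2" by (rule div_le_mono)
  moreover obtain e where "c = e + 2" using assms(2) by (metis add.commute le_Suc_ex)
  ultimately show ?thesis by simp
qed




locale cgame =
  fixes V :: "'a set" and E :: "'a \<Rightarrow> 'a \<Rightarrow> bool" and c :: nat
  assumes fin: "finite V" and sym: "E u v \<Longrightarrow> E v u" and EV: "E u v \<Longrightarrow> u \<in> V \<and> v \<in> V"
    and conn: "u \<in> V \<Longrightarrow> w \<in> V \<Longrightarrow> (relS V E)\<^sup>*\<^sup>* u w"
    and cyc: "is_cycle V E xs \<Longrightarrow> length xs \<le> c" and c2: "2 \<le> c"
begin

definition pos :: "'a list \<Rightarrow> 'a list" where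
  "pos P = map (\<lambda>j. P ! (length P - 1 - (2*j+1))) [0..<c div 2]"

lemma cycle_bound:
  assumes P: "walk E P" "distinct P" "set P \<subseteq> V" and i: "Suc i < length P"
    and r: "r \<in> V - set P" and rz: "(relS (V - set P) E)\<^sup>*\<^sup>* r z" and z: "E z (last P)"
    and ri: "E r (P ! i)"
  shows "length P - i + 1 \<le> c"
proof -
  obtain Q0 where Q0: "Q0 \<noteq> []" "hd Q0 = r" "last Q0 = z" "distinct Q0" "set Q0 \<subseteq> V - set P" "walk E Q0"
    using simple_path[OF rz r] by blast
  define Q where "Q = rev Q0"
  define xs where "xs = drop i P @ Q"
  have wQ: "walk E Q" unfolding Q_def using walk_rev[OF sym Q0(6)] by blast
  have lastd: "last (drop i P) = last P" using i by (simp add: last_drop)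
  have hdQ: "hd Q = z" unfolding Q_def using Q0 by (simp add: hd_rev)
  have lastQ: "last Q = r" unfolding Q_def using Q0 by (simp add: last_rev)
  have wxs: "walk E xs" unfolding xs_def
    using walk_drop[OF P(1)] wQ lastd hdQ z sym i Q0(1) unfolding Q_def
    by (auto simp: walk_append)
  have dis: "distinct xs" unfolding xs_def Q_def using P(2) Q0(4,5) set_drop_subset[of i P]
    by auto
  have len: "length xs = length P - i + length Q0" unfolding xs_def Q_def by simp
  have "length Q0 \<ge> 1" using Q0(1) by (cases Q0) auto
  have hdx: "hd xs = P ! i" unfolding xs_def using i by (simp add: hd_drop_conv_nth)
  have lastx: "last xs = r" unfolding xs_def using lastQ Q0(1) Q_def by simp
  have "is_cycle V E xs" unfolding is_cycle_def
    using len \<open>length Q0 \<ge> 1\<close> i dis P(3) Q0(5) set_drop_subset[of i P] wxs[unfolded walk_nth] hdx lastx ri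
    unfolding xs_def Q_def by auto
  then have "length xs \<le> c" by (rule cyc)
  then show ?thesis using len \<open>length Q0 \<ge> 1\<close> by linarith
qed

lemma dominate:
  assumes w: "walk E P'" and i: "i < length P'" and d: "length P' - i \<le> c"
  shows "cops_force V E (pos P') (P' ! i)"
proof -
  define j where "j = (length P' - 1 - i - 1) div 2"
  define k where "k = length P' - 1 - (2*j+1)"
  have jm: "j < c div 2" unfolding j_def using jm[OF d c2 i] .
  have kk: "k = i \<or> Suc k = i \<or> k = Suc i" using arith_dom[OF i] unfolding j_def k_def by blast
  have kl: "k < length P'" unfolding k_def using i by linarith
  have posj: "pos P' ! j = P' ! k" unfolding pos_def k_def using jm by simp
  have adj: "P' ! i = P' ! k \<or> E (P' ! k) (P' ! i)"
    using kk w[unfolded walk_nth] kl i sym by auto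
  define cs where "cs = (pos P')[j := P' ! i]"
  have lp: "length (pos P') = c div 2" unfolding pos_def by simp
  have "cop_move E (pos P') cs" unfolding cop_move_def list_all2_conv_all_nth
  proof (intro conjI allI impI)
    show "length (pos P') = length cs" unfolding cs_def by simp
    fix n assume "n < length (pos P')"
    show "cs ! n = pos P' ! n \<or> E (pos P' ! n) (cs ! n)"
    proof (cases "n = j")
      case True then show ?thesis unfolding cs_def using adj posj jm lp by auto
    next
      case False then show ?thesis unfolding cs_def by simp
    qed
  qed
  moreover have "P' ! i \<in> set cs" unfolding cs_def using jm lp by (simp add: set_update_memI)
  ultimately show ?thesis by (meson cops_force.move)
qed


lemma main:
  assumes "walk E P" "distinct P" "P \<noteq> []" "set P \<subseteq> V" "r \<in> V - set P"
    "(relS (V - set P) E)\<^sup>*\<^sup>* r z" "E z (last P)"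
  shows "cops_force V E (pos P) r"
  using assms
proof (induction "card V - length P" arbitrary: P r z rule: less_induct)
  case less
  note P = less.prems
  define P' where "P' = P @ [z]"
  have zS: "z \<in> V - set P" using reach_in[OF P(6) P(5)] .
  have wP': "walk E P'" unfolding P'_def using P(1,3,7) sym by (auto simp: walk_append)
  have dP': "distinct P'" unfolding P'_def using P(2) zS by simp
  have sP': "set P' \<subseteq> V" unfolding P'_def using P(4) zS by simp
  have lastP': "last P' = z" unfolding P'_def by simp
  have setP': "V - set P' = V - set P - {z}" unfolding P'_def by auto
  have lenP': "length P' = Suc (length P)" unfolding P'_def by simp
  have cardP': "length P' \<le> card V" using distinct_card[OF dP'] card_mono[OF fin sP'] by simp
  have mv: "cop_move E (pos P) (pos P')" unfolding cop_move_def list_all2_conv_all_nth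
  proof (intro conjI allI impI)
    show "length (pos P) = length (pos P')" unfolding pos_def by simp
    fix j assume "j < length (pos P)"
    then have j: "j < c div 2" unfolding pos_def by simp
    define a where "a = length P - 1 - (2*j+1)"
    have a: "a < length P" unfolding a_def using P(3) by (cases P) auto
    have pj: "pos P ! j = P' ! a" unfolding pos_def P'_def using j a by (simp add: nth_append a_def)
    have pj': "pos P' ! j = P' ! (length P' - 1 - (2*j+1))" unfolding pos_def using j by simp
    have "length P' - 1 - (2*j+1) = a \<or> length P' - 1 - (2*j+1) = Suc a"
      unfolding lenP' a_def by linarith
    then show "pos P' ! j = pos P ! j \<or> E (pos P ! j) (pos P' ! j)"
      using pj pj' wP'[unfolded walk_nth] a lenP' by auto
  qed
  show ?case
  proof (rule cops_force.move[OF mv], rule disjI2, intro allI impI)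
    fix r' assume rr': "r' = r \<or> E r r'"
    have r'V: "r' \<in> V" using rr' P(5) EV by auto
    show "r' \<in> set (pos P') \<or> cops_force V E (pos P') r'"
    proof (cases "r' \<in> set P'")
      case True
      then obtain i where i: "i < length P'" "r' = P' ! i" by (metis in_set_conv_nth)
      have "length P' - i \<le> c"
      proof (cases "i = length P")
        case True then show ?thesis using lenP' c2 by simp
      next
        case False
        then have il: "i < length P" using i lenP' by simp
        then have Pi: "P' ! i = P ! i" unfolding P'_def by (simp add: nth_append)
        have "r' \<noteq> r" using i(2) Pi il P(5) by (metis DiffD2 nth_mem)
        then have er: "E r (P ! i)" using rr' i(2) Pi by simp
        show ?thesis
        proof (cases "Suc i < length P")
          case True
          from cycle_bound[OF P(1,2,4) True P(5,6,7) er] show ?thesis using lenP' by simp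
        next
          case False then show ?thesis using il lenP' c2 by simp
        qed
      qed
      then show ?thesis using dominate[OF wP' i(1)] i(2) by simp
    next
      case False
      have r'S: "r' \<in> V - set P'" using False r'V by simp
      obtain z' where z': "(relS (V - set P') E)\<^sup>*\<^sup>* r' z'" "E z' (last P')"
      proof (cases "r = z")
        case True
        then have "E z r'" using rr' False unfolding P'_def by auto
        then show ?thesis using that[of r'] sym lastP' by auto
      next
        case False
        obtain y where y: "(relS (V - set P - {z}) E)\<^sup>*\<^sup>* r y" "y \<in> V - set P - {z}" "E y z"
          using first_hit[OF P(6) False] by blast
        have "(relS (V - set P') E)\<^sup>*\<^sup>* r' y"
        proof (cases "r' = r")
          case True then show ?thesis using y(1) setP' by simp
        next
          case False
          then have "E r r'" using rr' by simp
          then have "relS (V - set P') E r' r" using r'S P(5) \<open>r \<noteq> z\<close> sym setP' by (auto simp: relS_def)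
          then show ?thesis using y(1) setP' by (metis converse_rtranclp_into_rtranclp)
        qed
        then show ?thesis using that y(3) lastP' by blast
      qed
      have "card V - length P' < card V - length P" using cardP' lenP' by linarith
      from less(1)[OF this wP' dP' _ sP' r'S z'] show ?thesis unfolding P'_def by simp
    qed
  qed
qed

lemma win:
  assumes "V \<noteq> {}"
  shows "cops_win V E (c div 2)"
proof -
  obtain v0 where v0: "v0 \<in> V" using assms by blast
  have m: "c div 2 \<ge> 1" using c2 by simp
  have pv: "pos [v0] = replicate (c div 2) v0" unfolding pos_def by (simp add: map_replicate_const[symmetric] list_eq_iff_nth_eq)
  show ?thesis unfolding cops_win_def
  proof (intro exI[of _ "pos [v0]"] conjI ballI)
    show "length (pos [v0]) = c div 2" unfolding pos_def by simp
    show "set (pos [v0]) \<subseteq> V" using pv v0 by (simp add: set_replicate_conv_if)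
    fix r assume r: "r \<in> V"
    show "cops_force V E (pos [v0]) r"
    proof (cases "r = v0")
      case True then show ?thesis using pv m by (simp add: cops_force.caught)
    next
      case False
      obtain y where y: "(relS (V - {v0}) E)\<^sup>*\<^sup>* r y" "y \<in> V - {v0}" "E y v0"
        using first_hit[OF conn[OF r v0] False] by blast
      show ?thesis by (rule main[of "[v0]" r y]) (use y r False v0 in auto)
    qed
  qed
qed
end


lemma component_conn:
  assumes sg: "simple_graph V E" and v: "v \<in> V"
  defines "C \<equiv> component_of V E v"
  shows "u \<in> C \<Longrightarrow> w \<in> C \<Longrightarrow> (relS C (induced C E))\<^sup>*\<^sup>* u w"
proof -
  have vu: "(relS C (induced C E))\<^sup>*\<^sup>* v u" if "u \<in> C" for u
  proof -
    have "(\<lambda>x y. x \<in> V \<and> y \<in> V \<and> E x y)\<^sup>*\<^sup>* v u" using that unfolding C_def component_of_def by simp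
    then show ?thesis
    proof (induction rule: rtranclp_induct)
      case base then show ?case by simp
    next
      case (step y u)
      have "y \<in> C" "u \<in> C" using step unfolding C_def component_of_def
        by (auto intro: rtranclp.rtrancl_into_rtrancl)
      then have "relS C (induced C E) y u" using step(2) unfolding relS_def induced_def by simp
      then show ?case using step(3) by (meson rtranclp.rtrancl_into_rtrancl)
    qed
  qed
  have sy: "symp (relS C (induced C E))" using sg unfolding symp_def relS_def induced_def simple_graph_def by blast
  assume "u \<in> C" "w \<in> C"
  then show ?thesis using vu[of u] vu[of w] sympD[OF symp_rtranclp[OF sy]]
    by (meson rtranclp_trans)
qed

theorem corollary15:
  fixes V :: "'a set" and E :: "'a \<Rightarrow> 'a \<Rightarrow> bool"
  assumes "simple_graph V E"
  shows "2 * enat (cop_number V E) \<le> circumference V E"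
proof (cases "\<exists>xs. is_cycle V E xs")
  case False
  then show ?thesis unfolding circumference_def by (simp del: not_ex)
next
  case True
  note sg = assms[unfolded simple_graph_def]
  define L where "L = {length xs | xs. is_cycle V E xs}"
  define c where "c = Max L"
  have finL: "finite L"
  proof (rule finite_subset[of _ "{..card V}"])
    show "L \<subseteq> {..card V}"
    proof
      fix n assume "n \<in> L"
      then obtain xs where "n = length xs" "is_cycle V E xs" unfolding L_def by blast
      then show "n \<in> {..card V}" unfolding is_cycle_def
        using distinct_card[of xs] card_mono[of V "set xs"] sg by auto
    qed
  qed simp
  have cyc: "length xs \<le> c" if "is_cycle V E xs" for xs
    unfolding c_def using that finL by (intro Max_ge) (auto simp: L_def)
  obtain xs0 where "is_cycle V E xs0" using True by blast
  then have c3: "3 \<le> c" using cyc[of xs0] unfolding is_cycle_def by simp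
  have circ: "circumference V E = enat c" unfolding circumference_def c_def L_def using True by simp
  have comp: "cop_number_connected C (induced C E) \<le> c div 2" if Cc: "C \<in> components V E" for C
  proof -
    obtain v where v: "v \<in> V" "C = component_of V E v" using Cc unfolding components_def by blast
    have CV: "C \<subseteq> V" unfolding v(2) component_of_def by auto
    have vC: "v \<in> C" unfolding v(2) component_of_def using v(1) by simp
    interpret g: cgame C "induced C E" c
    proof
      show "finite C" using CV sg finite_subset by blast
      fix u w assume "induced C E u w" then show "induced C E w u" using sg unfolding induced_def by blast
    next
      fix u w assume "induced C E u w" then show "u \<in> C \<and> w \<in> C" unfolding induced_def by blast
    next
      fix u w assume "u \<in> C" "w \<in> C" then show "(relS C (induced C E))\<^sup>*\<^sup>* u w"
        using component_conn[OF assms v(1)] v(2) by blast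
    next
      fix xs assume "is_cycle C (induced C E) xs"
      then have "is_cycle V E xs" using CV unfolding is_cycle_def induced_def by auto
      then show "length xs \<le> c" by (rule cyc)
    next
      show "2 \<le> c" using c3 by simp
    qed
    have "cops_win C (induced C E) (c div 2)" using g.win vC by blast
    moreover have "1 \<le> c div 2" using c3 by simp
    ultimately show ?thesis unfolding cop_number_connected_def by (simp add: Least_le)
  qed
  have fc: "finite (components V E)" unfolding components_def using sg by simp
  have "cop_number V E \<le> c div 2" unfolding cop_number_def
    using fc comp by (subst Max_le_iff) auto
  then have "2 * cop_number V E \<le> c" by linarith
  then show ?thesis unfolding circ by (simp add: numeral_eq_enat)
qed
end
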